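(* Let $(\sigma_n)_{n\ge1}$ be positive measures on $[0,\infty[$ with $\int\frac{d\sigma_n(x)}{x+1}<\infty$, and let $\varphi_n(z)=\int_0^\infty\frac{d\sigma_n(x)}{x+z}$. Assume that $\varphi_n\to\varphi$ uniformly on compact subsets of the half-plane $\Re z>0$ for some holomorphic function $\varphi$ there. Then $\varphi$ is a Stieltjes transform, $\varphi(z)=a+\int_0^\infty\frac{d\sigma(x)}{x+z}$ with $a\ge0$ and $\sigma$ a positive measure with $\int\frac{d\sigma(x)}{x+1}<\infty$, one has $\sigma_n\to\sigma$ vaguely, and $\varphi_n\to\varphi$ uniformly on compact subsets of $\mathbb C\setminus]-\infty,0]$.
   Context: A Stieltjes transform is a function of the form $\varphi(z)=a+\int_{[0,\infty[}\frac{d\sigma(x)}{x+z}$, $z\in\mathbb C\setminus]-\infty,0]$, with $a\ge0$ and $\sigma$ a positive measure on $[0,\infty[$ with $\int\frac{d\sigma(x)}{x+1}<\infty$. Vague convergence means convergence of integrals of continuous compactly supported functions on $[0,\infty[$. *)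

theory Defs
  imports "HOL-Analysis.Analysis"
begin

definition pos_measure_halfline :: "real measure \<Rightarrow> bool" where
  "pos_measure_halfline \<sigma> \<longleftrightarrow> sets \<sigma> = sets (restrict_space borel {0..})"

definition stieltjes_admissible :: "real measure \<Rightarrow> bool" where
  "stieltjes_admissible \<sigma> \<longleftrightarrow> pos_measure_halfline \<sigma> \<and>
     (\<integral>\<^sup>+ x. ennreal (1 / (x + 1)) \<partial>\<sigma>) < \<infinity>"

definition stieltjes_int :: "real measure \<Rightarrow> complex \<Rightarrow> complex" where
  "stieltjes_int \<sigma> z = (\<integral> x. 1 / (complex_of_real x + z) \<partial>\<sigma>)"

definition cut_plane :: "complex set" where
  "cut_plane = UNIV - complex_of_real ` {..0}"

definition vague_convergence :: "(nat \<Rightarrow> real measure) \<Rightarrow> real measure \<Rightarrow> bool" where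
  "vague_convergence \<sigma>s \<sigma> \<longleftrightarrow>
     (\<forall>f :: real \<Rightarrow> real. continuous_on {0..} f \<and>
        (\<exists>K. compact K \<and> K \<subseteq> {0..} \<and> (\<forall>x \<in> {0..} - K. f x = 0)) \<longrightarrow>
        (\<lambda>n. \<integral> x. f x \<partial>\<sigma>s n) \<longlonglongrightarrow> (\<integral> x. f x \<partial>\<sigma>))"

end

theory Submission
  imports Defs "HOL-Probability.Probability"
begin

definition clamp :: "real \<Rightarrow> real" where
  "clamp t = max 0 (min 1 t)"

lemma clamp_in: "clamp t \<in> {0..1}"
  by (auto simp: clamp_def)

lemma clamp_id: "t \<in> {0..1} \<Longrightarrow> clamp t = t"
  by (auto simp: clamp_def)

lemma continuous_on_clamp: "continuous_on UNIV clamp"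
  unfolding clamp_def by (intro continuous_intros)

lemma isCont_clamp: "isCont clamp t"
  using continuous_on_clamp by (simp add: continuous_on_eq_continuous_at)

lemma clamp_measurable [measurable]: "clamp \<in> borel_measurable borel"
  unfolding clamp_def by measurable

lemma cont_clamp_comp:
  assumes "continuous_on {0..1} f"
  shows "continuous_on UNIV (\<lambda>t. f (clamp t))"
  by (rule continuous_on_compose2[OF assms continuous_on_clamp]) (auto simp: clamp_def)

lemma meas_clamp_comp:
  fixes f :: "real \<Rightarrow> 'b::{banach, second_countable_topology}"
  assumes "continuous_on {0..1} f"
  shows "(\<lambda>t. f (clamp t)) \<in> borel_measurable borel"
  by (rule borel_measurable_continuous_onI[OF cont_clamp_comp[OF assms]])

lemma bound_clamp_comp:
  fixes f :: "real \<Rightarrow> 'b::{banach, second_countable_topology}"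
  assumes "continuous_on {0..1} f"
  obtains C where "C \<ge> 0" "\<And>t. norm (f (clamp t)) \<le> C"
proof -
  have "compact (f ` {0..1})"
    by (rule compact_continuous_image[OF assms]) simp
  then obtain C where C: "\<forall>x\<in>f ` {0..1}. norm x \<le> C"
    using compact_imp_bounded bounded_iff by metis
  have "norm (f (clamp t)) \<le> C" for t
    using C clamp_in by blast
  moreover have "C \<ge> 0" using C[rule_format, of "f 0"] norm_ge_zero[of "f 0"] by (auto simp del: norm_ge_zero)
  ultimately show ?thesis using that by blast
qed

lemma integrable_clamp_comp:
  fixes f :: "real \<Rightarrow> 'b::{banach, second_countable_topology}"
  assumes "finite_measure L" "sets L = sets borel" "continuous_on {0..1} f"
  shows "integrable L (\<lambda>t. f (clamp t))"
proof -
  obtain C where C: "\<And>t. norm (f (clamp t)) \<le> C"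
    using bound_clamp_comp[OF assms(3)] by blast
  show ?thesis
    apply (rule finite_measure.integrable_const_bound[OF assms(1), of _ C])
    using C apply simp
    using meas_clamp_comp[OF assms(3)] measurable_cong_sets[OF assms(2) refl] by blast
qed

lemma integral_clamp_diff_bound:
  fixes f g :: "real \<Rightarrow> 'b::{banach, second_countable_topology}"
  assumes "finite_measure L" "sets L = sets borel" "continuous_on {0..1} f"
     "continuous_on {0..1} g" "\<And>t. t \<in> {0..1} \<Longrightarrow> norm (f t - g t) \<le> e"
  shows "norm ((\<integral>t. f (clamp t) \<partial>L) - (\<integral>t. g (clamp t) \<partial>L)) \<le> e * measure L UNIV"
proof -
  have i1: "integrable L (\<lambda>t. f (clamp t))" and i2: "integrable L (\<lambda>t. g (clamp t))"
    using integrable_clamp_comp assms by blast+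
  have sp: "space L = UNIV" using sets_eq_imp_space_eq[OF assms(2)] by simp
  have "(\<integral>t. f (clamp t) \<partial>L) - (\<integral>t. g (clamp t) \<partial>L) = (\<integral>t. f (clamp t) - g (clamp t) \<partial>L)"
    using Bochner_Integration.integral_diff[OF i1 i2] by simp
  also have "norm \<dots> \<le> (\<integral>t. norm (f (clamp t) - g (clamp t)) \<partial>L)"
    by (rule integral_norm_bound)
  also have "\<dots> \<le> (\<integral>t. e \<partial>L)"
    apply (rule integral_mono)
    using i1 i2 apply (intro integrable_norm Bochner_Integration.integrable_diff; simp)
    using finite_measure.integrable_const[OF assms(1)] apply blast
    using assms(5) clamp_in by blast
  also have "\<dots> = e * measure L UNIV"
    by (simp add: sp)
  finally show ?thesis .
qed


lemma norm_tri3: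
  fixes a b c d :: "'a::real_normed_vector"
  shows "norm (a - c) \<le> norm (a - b) + norm (b - d) + norm (c - d)"
proof -
  have eq: "a - c = ((a - b) + (b - d)) - (c - d)" by simp
  have "norm (a - c) \<le> norm ((a - b) + (b - d)) + norm (c - d)"
    by (subst eq) (rule norm_triangle_ineq4)
  moreover have "norm ((a - b) + (b - d)) \<le> norm (a - b) + norm (b - d)"
    by (rule norm_triangle_ineq)
  ultimately show ?thesis by linarith
qed

locale wconv =
  fixes N :: "nat \<Rightarrow> real measure" and M :: "real measure" and B :: real
  assumes finN: "\<And>n. finite_measure (N n)" and finM: "finite_measure M"
    and setsN: "\<And>n. sets (N n) = sets borel" and setsM: "sets M = sets borel"
    and bndN: "\<And>n. measure (N n) UNIV \<le> B" and bndM: "measure M UNIV \<le> B"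
begin

definition cv :: "(real \<Rightarrow> 'b::{banach, second_countable_topology}) \<Rightarrow> bool" where
  "cv f \<longleftrightarrow> (\<lambda>n. \<integral>t. f (clamp t) \<partial>N n) \<longlonglongrightarrow> (\<integral>t. f (clamp t) \<partial>M)"

lemma B_nonneg: "B \<ge> 0"
  using bndM measure_nonneg[of M UNIV] by linarith

lemma intN:
  fixes f :: "real \<Rightarrow> 'b::{banach, second_countable_topology}"
  shows "continuous_on {0..1} f \<Longrightarrow> integrable (N n) (\<lambda>t. f (clamp t))"
  by (rule integrable_clamp_comp[OF finN setsN])

lemma intM:
  fixes f :: "real \<Rightarrow> 'b::{banach, second_countable_topology}"
  shows "continuous_on {0..1} f \<Longrightarrow> integrable M (\<lambda>t. f (clamp t))"
  by (rule integrable_clamp_comp[OF finM setsM])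

lemma cv_add:
  fixes f g :: "real \<Rightarrow> 'b::{banach, second_countable_topology}"
  assumes "continuous_on {0..1} f" "continuous_on {0..1} g" "cv f" "cv g"
  shows "cv (\<lambda>t. f t + g t)"
  using assms unfolding cv_def
  by (simp add: Bochner_Integration.integral_add intN intM tendsto_add)

lemma cv_scale:
  fixes f :: "real \<Rightarrow> real"
  assumes "cv f"
  shows "cv (\<lambda>t. c * f t)"
  using assms unfolding cv_def by (simp add: tendsto_mult_left)

lemma cv_sum:
  fixes f :: "'i \<Rightarrow> real \<Rightarrow> real"
  assumes "finite I" "\<And>i. i \<in> I \<Longrightarrow> continuous_on {0..1} (f i)" "\<And>i. i \<in> I \<Longrightarrow> cv (f i)"
  shows "cv (\<lambda>t. \<Sum>i\<in>I. f i t)"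
  using assms
proof (induction I rule: finite_induct)
  case empty
  then show ?case by (simp add: cv_def)
next
  case (insert x F)
  have "cv (\<lambda>t. f x t + (\<Sum>i\<in>F. f i t))"
    apply (rule cv_add)
    using insert by (auto intro!: continuous_on_sum)
  then show ?case using insert by simp
qed

lemma cv_approx:
  fixes h :: "real \<Rightarrow> 'b::{banach, second_countable_topology}"
  assumes h: "continuous_on {0..1} h"
    and appr: "\<And>e. e > 0 \<Longrightarrow> \<exists>g. continuous_on {0..1} g \<and> cv g \<and> (\<forall>t\<in>{0..1}. norm (h t - g t) \<le> e)"
  shows "cv h"
  unfolding cv_def
proof (rule LIMSEQ_I)
  fix r :: real assume r: "r > 0"
  define e where "e = r / (3 * (B + 1))"
  have e: "e > 0" using r B_nonneg by (simp add: e_def)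
  have eB: "e * B < r / 3"
    using r B_nonneg by (simp add: e_def field_simps)
  obtain g where g: "continuous_on {0..1} g" "cv g" "\<forall>t\<in>{0..1}. norm (h t - g t) \<le> e"
    using appr[OF e] by blast
  have "r / 3 > 0" using r by simp
  then obtain n0 where n0: "\<forall>n\<ge>n0. norm ((\<integral>t. g (clamp t) \<partial>N n) - (\<integral>t. g (clamp t) \<partial>M)) < r / 3"
    using g(2) unfolding cv_def by (meson LIMSEQ_iff)
  show "\<exists>no. \<forall>n\<ge>no. norm ((\<integral>t. h (clamp t) \<partial>N n) - (\<integral>t. h (clamp t) \<partial>M)) < r"
  proof (intro exI allI impI)
    fix n assume "n \<ge> n0"
    have 1: "norm ((\<integral>t. h (clamp t) \<partial>N n) - (\<integral>t. g (clamp t) \<partial>N n)) \<le> e * B"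
    proof -
      have "norm ((\<integral>t. h (clamp t) \<partial>N n) - (\<integral>t. g (clamp t) \<partial>N n)) \<le> e * measure (N n) UNIV"
        using integral_clamp_diff_bound[OF finN setsN h g(1), of e n] g(3) by blast
      moreover have "e * measure (N n) UNIV \<le> e * B"
        using mult_left_mono[OF bndN[of n], of e] e by simp
      ultimately show ?thesis by linarith
    qed
    have 2: "norm ((\<integral>t. h (clamp t) \<partial>M) - (\<integral>t. g (clamp t) \<partial>M)) \<le> e * B"
    proof -
      have "norm ((\<integral>t. h (clamp t) \<partial>M) - (\<integral>t. g (clamp t) \<partial>M)) \<le> e * measure M UNIV"
        using integral_clamp_diff_bound[OF finM setsM h g(1), of e] g(3) by blast
      moreover have "e * measure M UNIV \<le> e * B"
        using mult_left_mono[OF bndM, of e] e by simp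
      ultimately show ?thesis by linarith
    qed
    have 3: "norm ((\<integral>t. g (clamp t) \<partial>N n) - (\<integral>t. g (clamp t) \<partial>M)) < r / 3"
      using n0 \<open>n \<ge> n0\<close> by blast
    have "norm ((\<integral>t. h (clamp t) \<partial>N n) - (\<integral>t. h (clamp t) \<partial>M))
       \<le> norm ((\<integral>t. h (clamp t) \<partial>N n) - (\<integral>t. g (clamp t) \<partial>N n))
         + norm ((\<integral>t. g (clamp t) \<partial>N n) - (\<integral>t. g (clamp t) \<partial>M))
         + norm ((\<integral>t. h (clamp t) \<partial>M) - (\<integral>t. g (clamp t) \<partial>M))"
      by (rule norm_tri3)
    then show "norm ((\<integral>t. h (clamp t) \<partial>N n) - (\<integral>t. h (clamp t) \<partial>M)) < r"
      using 1 2 3 eB by linarith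
  qed
qed


context
  assumes hyp: "\<And>w::real. \<bar>w\<bar> < 1/2 \<Longrightarrow> cv (\<lambda>t. 1 / (1 + w * t))"
begin

lemma cv_pow: "cv (\<lambda>t::real. t ^ k)"
proof (induction k rule: less_induct)
  case (less k)
  show ?case
  proof (rule cv_approx)
    show "continuous_on {0..1} (\<lambda>t::real. t ^ k)" by (intro continuous_intros)
  next
    fix e :: real assume e: "e > 0"
    define w where "w = min (1/4) e"
    have w: "w > 0" "w \<le> e" "w < 1/2" using e by (auto simp: w_def)
    define c where "c = 1 / (-w) ^ k"
    define g where "g t = c * (1 / (1 + w * t)) + (\<Sum>j<k. (- c * (-w) ^ j) * t ^ j)" for t
    have pos: "1 + w * t > 0" if "t \<in> {0..1}" for t
      using w that by (simp add: add_pos_nonneg)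
    have gc: "continuous_on {0..1} g"
      unfolding g_def using pos
      by (intro continuous_intros) (auto simp: order.strict_iff_order)
    have c1: "continuous_on {0..1} (\<lambda>t. 1 / (1 + w * t))"
      using pos by (intro continuous_intros) (auto simp: order.strict_iff_order)
    have h1: "cv (\<lambda>t. c * (1 / (1 + w * t)))"
      by (rule cv_scale[OF hyp]) (use w in simp)
    have h2: "cv (\<lambda>t. \<Sum>j<k. (- c * (-w) ^ j) * t ^ j)"
    proof (rule cv_sum)
      fix j assume "j \<in> {..<k}"
      then show "cv (\<lambda>t. (- c * (-w) ^ j) * t ^ j)"
        by (intro cv_scale less.IH) simp
    qed (auto intro!: continuous_intros)
    have "cv g"
      unfolding g_def
      by (rule cv_add[OF _ _ h1 h2]) (use c1 pos in \<open>fastforce intro!: continuous_intros\<close>)+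
    moreover have "\<forall>t\<in>{0..1}. norm (t ^ k - g t) \<le> e"
    proof
      fix t :: real assume t: "t \<in> {0..1}"
      define u where "u = w * t"
      have u: "u \<ge> 0" "u \<le> w" using w t by (auto simp: u_def mult_le_cancel_left1)
      have u1: "1 + u > 0" using u by simp
      have gs: "(\<Sum>j<k. (-u) ^ j) = (1 - (-u) ^ k) / (1 + u)"
        using sum_gp_strict[of "-u" k] u by auto
      have "(\<Sum>j<k. (- c * (-w) ^ j) * t ^ j) = - c * (\<Sum>j<k. (-u) ^ j)"
        unfolding sum_distrib_left
      proof (rule sum.cong)
        fix j assume "j \<in> {..<k}"
        have "(-u) ^ j = (-w) ^ j * t ^ j"
          by (simp add: u_def power_mult_distrib[symmetric])
        then show "(- c * (-w) ^ j) * t ^ j = - c * (-u) ^ j" by simp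
      qed simp
      hence "g t = c * (1 / (1 + u)) - c * ((1 - (-u) ^ k) / (1 + u))"
        unfolding g_def u_def[symmetric] gs by simp
      also have "\<dots> = c * (1 / (1 + u) - (1 - (-u) ^ k) / (1 + u))"
        by (simp only: right_diff_distrib)
      also have "\<dots> = c * ((1 - (1 - (-u) ^ k)) / (1 + u))"
        by (simp only: diff_divide_distrib)
      also have "\<dots> = c * (-u) ^ k / (1 + u)"
        by simp
      also have "\<dots> = t ^ k / (1 + u)"
      proof -
        have "(-u) ^ k = (-w) ^ k * t ^ k"
          by (simp add: u_def power_mult_distrib[symmetric])
        moreover have "(-w) ^ k \<noteq> 0" using w by simp
        ultimately show ?thesis by (simp add: c_def)
      qed
      finally have gt: "g t = t ^ k / (1 + u)" .
      have tk: "0 \<le> t ^ k" "t ^ k \<le> 1" using t by (auto intro: power_le_one)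
      have "t ^ k - g t = t ^ k * u / (1 + u)"
        using u1 by (simp add: gt field_simps)
      also have "\<dots> \<le> u"
      proof -
        have "t ^ k * u \<le> u * (1 + u)" using tk u by (simp add: mult.commute mult_left_mono)
        then show ?thesis using u1 by (simp add: divide_le_eq)
      qed
      finally have "t ^ k - g t \<le> e" using u w by linarith
      moreover have "t ^ k - g t \<ge> 0"
        using tk u u1 \<open>t ^ k - g t = t ^ k * u / (1 + u)\<close> by simp
      ultimately show "norm (t ^ k - g t) \<le> e" by simp
    qed
    ultimately show "\<exists>g. continuous_on {0..1} g \<and> cv g \<and> (\<forall>t\<in>{0..1}. norm (t ^ k - g t) \<le> e)"
      using gc by blast
  qed
qed

lemma cv_poly:
  assumes "real_polynomial_function p"
  shows "cv p"
proof -
  obtain a n where p: "p = (\<lambda>x. \<Sum>i\<le>n. a i * x ^ i)"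
    using real_polynomial_function_imp_sum[OF assms] by blast
  show ?thesis unfolding p
    by (rule cv_sum) (auto intro!: continuous_intros cv_scale cv_pow)
qed

lemma cv_cont:
  fixes f :: "real \<Rightarrow> real"
  assumes "continuous_on {0..1} f"
  shows "cv f"
proof (rule cv_approx[OF assms])
  fix e :: real assume "e > 0"
  obtain g where g: "real_polynomial_function g" "\<And>x. x \<in> {0..1} \<Longrightarrow> \<bar>f x - g x\<bar> < e"
    using Stone_Weierstrass_real_polynomial_function[OF compact_Icc assms \<open>e > 0\<close>] by blast
  have "continuous_on {0..1} g"
    by (meson continuous_at_imp_continuous_on continuous_real_polymonial_function g(1))
  moreover have "cv g" by (rule cv_poly[OF g(1)])
  ultimately show "\<exists>g. continuous_on {0..1} g \<and> cv g \<and> (\<forall>t\<in>{0..1}. norm (f t - g t) \<le> e)"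
    using g(2) by (auto intro!: exI[of _ g] less_imp_le)
qed

lemma cv_cont_complex:
  fixes F :: "real \<Rightarrow> complex"
  assumes "continuous_on {0..1} F"
  shows "cv F"
proof -
  have cR: "continuous_on {0..1} (\<lambda>t. Re (F t))" and cI: "continuous_on {0..1} (\<lambda>t. Im (F t))"
    using assms by (auto intro: continuous_intros)
  have 1: "cv (\<lambda>t. Re (F t))" "cv (\<lambda>t. Im (F t))"
    using cv_cont cR cI by blast+
  have iN: "integrable (N n) (\<lambda>t. F (clamp t))" for n using intN[OF assms] .
  have iM: "integrable M (\<lambda>t. F (clamp t))" using intM[OF assms] .
  show ?thesis
    unfolding cv_def tendsto_complex_iff
    using 1 unfolding cv_def
    by (simp add: integral_Re[OF iN, symmetric] integral_Re[OF iM, symmetric]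
        integral_Im[OF iN, symmetric] integral_Im[OF iM, symmetric])
qed

end


lemma unif:
  fixes F :: "complex \<Rightarrow> real \<Rightarrow> complex"
  assumes K: "compact K" and cont: "continuous_on (K \<times> {0..1}) (\<lambda>(z,t). F z t)"
    and pw: "\<And>z. z \<in> K \<Longrightarrow> cv (F z)"
  shows "uniform_limit K (\<lambda>n z. \<integral>t. F z (clamp t) \<partial>N n) (\<lambda>z. \<integral>t. F z (clamp t) \<partial>M) sequentially"
  unfolding uniform_limit_iff
proof (intro allI impI)
  fix r :: real assume r: "r > 0"
  define e where "e = r / (3 * (B + 1))"
  have e: "e > 0" using r B_nonneg by (simp add: e_def)
  have eB: "e * B < r / 3"
    using r B_nonneg by (simp add: e_def field_simps)
  have cz: "continuous_on {0..1} (F z)" if "z \<in> K" for z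
  proof -
    have "continuous_on {0..1} (Pair z)" by (intro continuous_intros)
    moreover have "Pair z ` {0..1} \<subseteq> K \<times> {0..1}" using that by auto
    ultimately show ?thesis
      using continuous_on_compose2[OF cont, of "{0..1}" "\<lambda>t. (z,t)"] by auto
  qed
  have "uniformly_continuous_on (K \<times> {0..1}) (\<lambda>(z,t). F z t)"
    by (rule compact_uniformly_continuous[OF cont compact_Times[OF K compact_Icc]])
  then obtain d where d: "d > 0"
    and dd: "\<And>x x'. x \<in> K \<times> {0..1} \<Longrightarrow> x' \<in> K \<times> {0..1} \<Longrightarrow> dist x' x < d \<Longrightarrow>
            dist ((\<lambda>(z,t). F z t) x') ((\<lambda>(z,t). F z t) x) < e"
    unfolding uniformly_continuous_on_def using e by metis
  have near: "norm (F z t - F c t) \<le> e" if "z \<in> K" "c \<in> K" "dist c z < d" "t \<in> {0..1}" for z c t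
  proof -
    have "dist (F z t) (F c t) < e"
      using dd[of "(c,t)" "(z,t)"] that by (simp add: dist_Pair_Pair dist_commute)
    then show ?thesis by (simp add: dist_norm)
  qed
  obtain C where C: "C \<subseteq> K" "finite C" "K \<subseteq> (\<Union>c\<in>C. ball c d)"
    using compactE_image[OF K, of K "\<lambda>z. ball z d"] d by force
  have "\<forall>\<^sub>F n in sequentially. \<forall>c\<in>C. dist (\<integral>t. F c (clamp t) \<partial>N n) (\<integral>t. F c (clamp t) \<partial>M) < r / 3"
  proof (rule eventually_ball_finite[OF C(2)], rule ballI)
    fix c assume "c \<in> C"
    then have "cv (F c)" using pw C(1) by auto
    then show "\<forall>\<^sub>F n in sequentially. dist (\<integral>t. F c (clamp t) \<partial>N n) (\<integral>t. F c (clamp t) \<partial>M) < r / 3"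
      unfolding cv_def by (rule tendstoD) (use r in simp)
  qed
  then show "\<forall>\<^sub>F n in sequentially. \<forall>z\<in>K. dist (\<integral>t. F z (clamp t) \<partial>N n) (\<integral>t. F z (clamp t) \<partial>M) < r"
  proof (rule eventually_mono, intro ballI)
    fix n z
    assume ev: "\<forall>c\<in>C. dist (\<integral>t. F c (clamp t) \<partial>N n) (\<integral>t. F c (clamp t) \<partial>M) < r / 3" and z: "z \<in> K"
    obtain c where c: "c \<in> C" "dist c z < d" using C(3) z by auto
    have cK: "c \<in> K" using c C(1) by auto
    have 1: "norm ((\<integral>t. F z (clamp t) \<partial>N n) - (\<integral>t. F c (clamp t) \<partial>N n)) \<le> e * B"
    proof -
      have "norm ((\<integral>t. F z (clamp t) \<partial>N n) - (\<integral>t. F c (clamp t) \<partial>N n)) \<le> e * measure (N n) UNIV"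
        using integral_clamp_diff_bound[OF finN setsN cz[OF z] cz[OF cK], of e n] near[OF z cK c(2)] by blast
      moreover have "e * measure (N n) UNIV \<le> e * B"
        using mult_left_mono[OF bndN[of n], of e] e by simp
      ultimately show ?thesis by linarith
    qed
    have 2: "norm ((\<integral>t. F z (clamp t) \<partial>M) - (\<integral>t. F c (clamp t) \<partial>M)) \<le> e * B"
    proof -
      have "norm ((\<integral>t. F z (clamp t) \<partial>M) - (\<integral>t. F c (clamp t) \<partial>M)) \<le> e * measure M UNIV"
        using integral_clamp_diff_bound[OF finM setsM cz[OF z] cz[OF cK], of e] near[OF z cK c(2)] by blast
      moreover have "e * measure M UNIV \<le> e * B"
        using mult_left_mono[OF bndM, of e] e by simp
      ultimately show ?thesis by linarith
    qed
    have 3: "norm ((\<integral>t. F c (clamp t) \<partial>N n) - (\<integral>t. F c (clamp t) \<partial>M)) < r / 3"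
      using ev c(1) by (simp add: dist_norm)
    have "norm ((\<integral>t. F z (clamp t) \<partial>N n) - (\<integral>t. F z (clamp t) \<partial>M))
       \<le> norm ((\<integral>t. F z (clamp t) \<partial>N n) - (\<integral>t. F c (clamp t) \<partial>N n))
         + norm ((\<integral>t. F c (clamp t) \<partial>N n) - (\<integral>t. F c (clamp t) \<partial>M))
         + norm ((\<integral>t. F z (clamp t) \<partial>M) - (\<integral>t. F c (clamp t) \<partial>M))"
      by (rule norm_tri3)
    then show "dist (\<integral>t. F z (clamp t) \<partial>N n) (\<integral>t. F z (clamp t) \<partial>M) < r"
      using 1 2 3 eB by (simp add: dist_norm)
  qed
qed

end


section \<open>Transfer of measures to [0,1]\<close>

definition TM :: "real measure \<Rightarrow> real measure" where
  "TM \<sigma> = distr (density \<sigma> (\<lambda>x. ennreal (1 / (x + 1)))) borel (\<lambda>x. x / (x + 1))"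

definition Gf :: "complex \<Rightarrow> real \<Rightarrow> complex" where
  "Gf z t = 1 / (complex_of_real t + z * (1 - complex_of_real t))"

lemma pmh_space: "pos_measure_halfline \<sigma> \<Longrightarrow> space \<sigma> = {0..}"
proof -
  assume "pos_measure_halfline \<sigma>"
  then have "sets \<sigma> = sets (restrict_space borel {0..})" unfolding pos_measure_halfline_def .
  then have "space \<sigma> = space (restrict_space borel ({0..}::real set))" by (rule sets_eq_imp_space_eq)
  then show ?thesis by (simp add: space_restrict_space)
qed

lemma pmh_meas:
  fixes f :: "real \<Rightarrow> 'b::topological_space"
  assumes "pos_measure_halfline \<sigma>" "f \<in> borel_measurable (restrict_space borel {0..})"
  shows "f \<in> borel_measurable \<sigma>"
proof -
  have "sets \<sigma> = sets (restrict_space borel {0..})" using assms(1) unfolding pos_measure_halfline_def .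
  then have "(borel_measurable \<sigma> :: (real \<Rightarrow> 'b) set) = borel_measurable (restrict_space borel {0..})"
    by (rule measurable_cong_sets[OF _ refl])
  then show ?thesis using assms(2) by simp
qed

lemma pmh_meas_borel:
  assumes "pos_measure_halfline \<sigma>" "f \<in> borel_measurable borel"
  shows "f \<in> borel_measurable \<sigma>"
  by (rule pmh_meas[OF assms(1) measurable_restrict_space1[OF assms(2)]])

lemma TM_sets [simp]: "sets (TM \<sigma>) = sets borel"
  by (simp add: TM_def)

lemma TM_space [simp]: "space (TM \<sigma>) = UNIV"
  by (simp add: TM_def)

lemma meas_frac [measurable]: "(\<lambda>x::real. x / (x + 1)) \<in> borel_measurable borel"
  by measurable

lemma TM_emeasure:
  assumes "pos_measure_halfline \<sigma>"
  shows "emeasure (TM \<sigma>) UNIV = (\<integral>\<^sup>+ x. ennreal (1 / (x + 1)) \<partial>\<sigma>)"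
proof -
  have m: "(\<lambda>x::real. x / (x + 1)) \<in> measurable (density \<sigma> (\<lambda>x. ennreal (1 / (x + 1)))) borel"
    using pmh_meas_borel[OF assms meas_frac] by simp
  have dm: "(\<lambda>x::real. ennreal (1 / (x + 1))) \<in> borel_measurable \<sigma>"
    by (rule pmh_meas_borel[OF assms]) measurable
  have "emeasure (TM \<sigma>) UNIV = emeasure (density \<sigma> (\<lambda>x. ennreal (1 / (x + 1)))) ((\<lambda>x::real. x / (x + 1)) -` UNIV \<inter> space (density \<sigma> (\<lambda>x. ennreal (1 / (x + 1)))))"
    unfolding TM_def by (rule emeasure_distr[OF m]) simp
  also have "\<dots> = emeasure (density \<sigma> (\<lambda>x. ennreal (1 / (x + 1)))) (space \<sigma>)"
    by simp
  also have "\<dots> = (\<integral>\<^sup>+ x. ennreal (1 / (x + 1)) * indicator (space \<sigma>) x \<partial>\<sigma>)"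
    by (rule emeasure_density[OF dm]) simp
  also have "\<dots> = (\<integral>\<^sup>+ x. ennreal (1 / (x + 1)) \<partial>\<sigma>)"
    by (rule nn_integral_cong) simp
  finally show ?thesis .
qed

lemma TM_finite:
  assumes "stieltjes_admissible \<sigma>"
  shows "finite_measure (TM \<sigma>)"
  using assms unfolding stieltjes_admissible_def
  by (intro finite_measureI) (auto simp: TM_emeasure less_top[symmetric])

lemma TM_int:
  fixes f :: "real \<Rightarrow> 'b::{banach, second_countable_topology}"
  assumes "pos_measure_halfline \<sigma>" "f \<in> borel_measurable borel"
  shows "(\<integral>t. f t \<partial>TM \<sigma>) = (\<integral>x. (1 / (x + 1)) *\<^sub>R f (x / (x + 1)) \<partial>\<sigma>)"
proof -
  have m: "(\<lambda>x::real. x / (x + 1)) \<in> measurable (density \<sigma> (\<lambda>x. ennreal (1 / (x + 1)))) borel"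
    using pmh_meas_borel[OF assms(1) meas_frac] by simp
  have "(\<integral>t. f t \<partial>TM \<sigma>) = (\<integral>x. f (x / (x + 1)) \<partial>density \<sigma> (\<lambda>x. ennreal (1 / (x + 1))))"
    unfolding TM_def by (rule integral_distr[OF m assms(2)])
  also have "\<dots> = (\<integral>x. (1 / (x + 1)) *\<^sub>R f (x / (x + 1)) \<partial>\<sigma>)"
  proof (rule integral_density)
    show "(\<lambda>x. f (x / (x + 1))) \<in> borel_measurable \<sigma>"
      by (rule pmh_meas_borel[OF assms(1)]) (use assms(2) in measurable)
    show "(\<lambda>x::real. 1 / (x + 1)) \<in> borel_measurable \<sigma>"
      by (rule pmh_meas_borel[OF assms(1)]) measurable
    show "AE x in \<sigma>. 0 \<le> 1 / (x + 1)"
      by (rule AE_I2) (simp add: pmh_space[OF assms(1)])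
  qed
  finally show ?thesis .
qed

lemma TM_AE:
  assumes "pos_measure_halfline \<sigma>"
  shows "AE t in TM \<sigma>. t \<in> {0..<1}"
proof -
  have m: "(\<lambda>x::real. x / (x + 1)) \<in> measurable (density \<sigma> (\<lambda>x. ennreal (1 / (x + 1)))) borel"
    using pmh_meas_borel[OF assms meas_frac] by simp
  show ?thesis
    unfolding TM_def
    apply (subst AE_distr_iff[OF m])
     apply simp
    apply (rule AE_I2)
    using pmh_space[OF assms] by auto
qed


lemma Gf_clamp_meas [measurable]: "(\<lambda>t. Gf z (clamp t)) \<in> borel_measurable borel"
  unfolding Gf_def by measurable

lemma stieltjes_TM:
  assumes "pos_measure_halfline \<sigma>"
  shows "stieltjes_int \<sigma> z = (\<integral>t. Gf z (clamp t) \<partial>TM \<sigma>)"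
proof -
  have "(\<integral>t. Gf z (clamp t) \<partial>TM \<sigma>) = (\<integral>x. (1 / (x + 1)) *\<^sub>R Gf z (clamp (x / (x + 1))) \<partial>\<sigma>)"
    by (rule TM_int[OF assms Gf_clamp_meas])
  also have "\<dots> = (\<integral>x. 1 / (complex_of_real x + z) \<partial>\<sigma>)"
  proof (rule Bochner_Integration.integral_cong[OF refl])
    fix x assume "x \<in> space \<sigma>"
    then have x: "x \<ge> 0" using pmh_space[OF assms] by auto
    have cl: "clamp (x / (x + 1)) = x / (x + 1)"
      using x by (intro clamp_id) auto
    have x1': "x + 1 \<noteq> 0" using x by simp
    have x1: "complex_of_real x + 1 \<noteq> 0"
    proof
      assume "complex_of_real x + 1 = 0"
      then have "complex_of_real (x + 1) = 0" by simp
      then show False using x1' by (simp only: of_real_eq_0_iff)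
    qed
    define X where "X = complex_of_real x"
    have a: "complex_of_real (x / (x + 1)) = X / (X + 1)" by (simp add: X_def)
    have X1: "X + 1 \<noteq> 0" using x1 by (simp add: X_def)
    have b: "1 - X / (X + 1) = 1 / (X + 1)"
    proof -
      have "1 - X / (X + 1) = (X + 1) / (X + 1) - X / (X + 1)" using X1 by simp
      also have "\<dots> = ((X + 1) - X) / (X + 1)" by (rule diff_divide_distrib[symmetric])
      also have "\<dots> = 1 / (X + 1)" by simp
      finally show ?thesis .
    qed
    have "complex_of_real (x / (x + 1)) + z * (1 - complex_of_real (x / (x + 1)))
        = X / (X + 1) + z / (X + 1)" unfolding a b by simp
    also have "\<dots> = (complex_of_real x + z) / (complex_of_real x + 1)"
      unfolding X_def by (simp add: add_divide_distrib)
    finally have "complex_of_real (x / (x + 1)) + z * (1 - complex_of_real (x / (x + 1)))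
        = (complex_of_real x + z) / (complex_of_real x + 1)" .
    then have gx: "Gf z (x / (x + 1)) = (X + 1) / (X + z)"
      by (simp add: Gf_def X_def)
    have "(1 / (x + 1)) *\<^sub>R Gf z (clamp (x / (x + 1))) = (1 / (X + 1)) * ((X + 1) / (X + z))"
      unfolding cl gx by (simp add: scaleR_conv_of_real X_def)
    also have "\<dots> = 1 / (X + z)" using X1 by simp
    finally show "(1 / (x + 1)) *\<^sub>R Gf z (clamp (x / (x + 1))) = 1 / (complex_of_real x + z)"
      by (simp add: X_def)
  qed
  finally show ?thesis by (simp add: stieltjes_int_def)
qed


lemma Gf_nz:
  assumes "z \<in> cut_plane" "t \<in> {0..1}"
  shows "complex_of_real t + z * (1 - complex_of_real t) \<noteq> 0"
proof
  assume eq: "complex_of_real t + z * (1 - complex_of_real t) = 0"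
  show False
  proof (cases "t = 1")
    case True then show False using eq by simp
  next
    case False
    then have t1: "1 - t > 0" using assms(2) by auto
    have zeq: "z * complex_of_real (1 - t) = - complex_of_real t"
      using eq by (simp add: eq_neg_iff_add_eq_0 add.commute)
    have nz: "complex_of_real (1 - t) \<noteq> 0" using t1 by simp
    have "z = (z * complex_of_real (1 - t)) / complex_of_real (1 - t)"
      using nz by simp
    also have "\<dots> = - complex_of_real t / complex_of_real (1 - t)" by (simp only: zeq)
    also have "\<dots> = complex_of_real (- t / (1 - t))" by simp
    finally have zz: "z = complex_of_real (- t / (1 - t))" .
    moreover have "- t / (1 - t) \<le> 0" using t1 assms(2) by auto
    ultimately have "z \<in> complex_of_real ` {..0}"
      by (intro image_eqI[of z _ "- t / (1 - t)"]) auto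
    then show False using assms(1) by (simp add: cut_plane_def)
  qed
qed

lemma Gf_cont2:
  assumes "K \<subseteq> cut_plane"
  shows "continuous_on (K \<times> {0..1}) (\<lambda>(z,t). Gf z t)"
proof -
  have d: "complex_of_real (snd p) + fst p * (1 - complex_of_real (snd p)) \<noteq> 0"
    if "p \<in> K \<times> {0..1}" for p
    using Gf_nz[of "fst p" "snd p"] that assms by (auto simp: mem_Times_iff)
  have "continuous_on (K \<times> {0..1}) (\<lambda>p. 1 / (complex_of_real (snd p) + fst p * (1 - complex_of_real (snd p))))"
    apply (rule continuous_on_divide)
      apply (intro continuous_intros)
     apply (intro continuous_intros)
    using d by blast
  then show ?thesis by (simp add: Gf_def case_prod_unfold)
qed

lemma Gf_cont:
  assumes "z \<in> cut_plane"
  shows "continuous_on {0..1} (Gf z)"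
proof -
  have d: "complex_of_real t + z * (1 - complex_of_real t) \<noteq> 0" if "t \<in> {0..1}" for t
    using Gf_nz[OF assms that] .
  have "continuous_on {0..1} (\<lambda>t. 1 / (complex_of_real t + z * (1 - complex_of_real t)))"
    apply (rule continuous_on_divide)
      apply (intro continuous_intros)
     apply (intro continuous_intros)
    using d by blast
  then show ?thesis by (simp add: Gf_def[abs_def])
qed

lemma Gf_one: "Gf z 1 = 1"
  by (simp add: Gf_def)


section \<open>Pulling back a measure on [0,1] to [0,oo[\<close>

definition RHO :: "real measure \<Rightarrow> real measure" where
  "RHO \<nu> = distr (restrict_space \<nu> {0..<1}) (restrict_space borel {0..}) (\<lambda>t. t / (1 - t))"

definition SIG :: "real measure \<Rightarrow> real measure" where
  "SIG \<nu> = density (RHO \<nu>) (\<lambda>x. ennreal (x + 1))"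

lemma borel_meas_sets:
  fixes g :: "real \<Rightarrow> 'b::topological_space"
  assumes "sets \<nu> = sets borel" "g \<in> borel_measurable borel"
  shows "g \<in> borel_measurable \<nu>"
proof -
  have "(borel_measurable \<nu> :: (real \<Rightarrow> 'b) set) = borel_measurable borel"
    by (rule measurable_cong_sets[OF assms(1) refl])
  then show ?thesis using assms(2) by simp
qed

lemma RHO_map_meas:
  assumes "sets \<nu> = sets borel"
  shows "(\<lambda>t::real. t / (1 - t)) \<in> measurable (restrict_space \<nu> {0..<1}) (restrict_space borel {0..})"
proof (rule measurable_restrict_space2)
  show "(\<lambda>t::real. t / (1 - t)) \<in> space (restrict_space \<nu> {0..<1}) \<rightarrow> {0..}"
    using sets_eq_imp_space_eq[OF assms] by (auto simp: space_restrict_space)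
  have "(\<lambda>t::real. t / (1 - t)) \<in> borel_measurable \<nu>"
    by (rule borel_meas_sets[OF assms]) measurable
  then show "(\<lambda>t::real. t / (1 - t)) \<in> borel_measurable (restrict_space \<nu> {0..<1})"
    by (rule measurable_restrict_space1)
qed

lemma RHO_sets [simp]: "sets (RHO \<nu>) = sets (restrict_space borel {0..})"
  by (simp add: RHO_def)

lemma RHO_space [simp]: "space (RHO \<nu>) = {0..}"
  by (simp add: RHO_def space_restrict_space)

lemma RHO_meas:
  fixes g :: "real \<Rightarrow> 'b::topological_space"
  shows "g \<in> borel_measurable (restrict_space borel {0..}) \<Longrightarrow> g \<in> borel_measurable (RHO \<nu>)"
  by (simp add: RHO_def)

lemma SIG_pmh: "pos_measure_halfline (SIG \<nu>)"
  by (simp add: SIG_def pos_measure_halfline_def)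

lemma SIG_admissible:
  assumes "sets \<nu> = sets borel" "finite_measure \<nu>"
  shows "stieltjes_admissible (SIG \<nu>)"
proof -
  have m1: "(\<lambda>x::real. ennreal (x + 1)) \<in> borel_measurable (RHO \<nu>)"
    by (rule RHO_meas, rule measurable_restrict_space1) measurable
  have m2: "(\<lambda>x::real. ennreal (1 / (x + 1))) \<in> borel_measurable (RHO \<nu>)"
    by (rule RHO_meas, rule measurable_restrict_space1) measurable
  have fr: "finite_measure (restrict_space \<nu> {0..<1})"
    by (rule finite_measure_restrict_space[OF assms(2)]) (simp add: assms(1))
  have fR: "finite_measure (RHO \<nu>)"
    unfolding RHO_def by (rule finite_measure.finite_measure_distr[OF fr RHO_map_meas[OF assms(1)]])
  have "(\<integral>\<^sup>+ x. ennreal (1 / (x + 1)) \<partial>SIG \<nu>) = (\<integral>\<^sup>+ x. ennreal (x + 1) * ennreal (1 / (x + 1)) \<partial>RHO \<nu>)"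
    unfolding SIG_def by (rule nn_integral_density[OF m1 m2])
  also have "\<dots> = (\<integral>\<^sup>+ x. 1 \<partial>RHO \<nu>)"
  proof (rule nn_integral_cong)
    fix x assume "x \<in> space (RHO \<nu>)"
    then have "x \<ge> 0" by simp
    then have "ennreal (x + 1) * ennreal (1 / (x + 1)) = ennreal ((x + 1) * (1 / (x + 1)))"
      by (intro ennreal_mult[symmetric]) auto
    also have "\<dots> = 1" using \<open>x \<ge> 0\<close> by simp
    finally show "ennreal (x + 1) * ennreal (1 / (x + 1)) = 1" .
  qed
  also have "\<dots> = emeasure (RHO \<nu>) (space (RHO \<nu>))" by simp
  also have "\<dots> < \<infinity>" using finite_measure.emeasure_finite[OF fR] by (simp add: less_top)
  finally show ?thesis using SIG_pmh unfolding stieltjes_admissible_def by simp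
qed

lemma SIG_int:
  fixes F :: "real \<Rightarrow> 'b::{banach, second_countable_topology}"
  assumes "sets \<nu> = sets borel" "F \<in> borel_measurable (restrict_space borel {0..})"
  shows "(\<integral>x. F x \<partial>SIG \<nu>) = (\<integral>t. indicator {0..<1} t *\<^sub>R ((1 / (1 - t)) *\<^sub>R F (t / (1 - t))) \<partial>\<nu>)"
proof -
  have m1: "(\<lambda>x::real. x + 1) \<in> borel_measurable (RHO \<nu>)"
    by (rule RHO_meas, rule measurable_restrict_space1) measurable
  have mF: "F \<in> borel_measurable (RHO \<nu>)" by (rule RHO_meas[OF assms(2)])
  have mF2: "(\<lambda>x. (x + 1) *\<^sub>R F x) \<in> borel_measurable (restrict_space borel {0..})"
  proof -
    have "(\<lambda>x::real. x + 1) \<in> borel_measurable (restrict_space borel {0..})"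
      by (rule measurable_restrict_space1) measurable
    then show ?thesis using assms(2) by measurable
  qed
  have "(\<integral>x. F x \<partial>SIG \<nu>) = (\<integral>x. (x + 1) *\<^sub>R F x \<partial>RHO \<nu>)"
    unfolding SIG_def
    by (rule integral_density[OF mF m1]) (rule AE_I2, simp)
  also have "\<dots> = (\<integral>t. (t / (1 - t) + 1) *\<^sub>R F (t / (1 - t)) \<partial>restrict_space \<nu> {0..<1})"
    unfolding RHO_def by (rule integral_distr[OF RHO_map_meas[OF assms(1)] mF2])
  also have "\<dots> = (\<integral>t. indicator {0..<1} t *\<^sub>R ((t / (1 - t) + 1) *\<^sub>R F (t / (1 - t))) \<partial>\<nu>)"
    by (rule integral_restrict_space) (simp add: assms(1))
  also have "\<dots> = (\<integral>t. indicator {0..<1} t *\<^sub>R ((1 / (1 - t)) *\<^sub>R F (t / (1 - t))) \<partial>\<nu>)"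
  proof (rule Bochner_Integration.integral_cong[OF refl])
    fix t :: real assume "t \<in> space \<nu>"
    show "indicator {0..<1} t *\<^sub>R ((t / (1 - t) + 1) *\<^sub>R F (t / (1 - t))) =
          indicator {0..<1} t *\<^sub>R ((1 / (1 - t)) *\<^sub>R F (t / (1 - t)))"
    proof (cases "t \<in> {0..<1}")
      case True
      then have "t / (1 - t) + 1 = 1 / (1 - t)" by (simp add: field_simps)
      then show ?thesis by simp
    qed simp
  qed
  finally show ?thesis .
qed

lemma stieltjes_SIG:
  assumes "sets \<nu> = sets borel"
  shows "stieltjes_int (SIG \<nu>) z = (\<integral>t. indicator {0..<1} t *\<^sub>R Gf z (clamp t) \<partial>\<nu>)"
proof -
  have mF: "(\<lambda>x::real. 1 / (complex_of_real x + z)) \<in> borel_measurable (restrict_space borel {0..})"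
    by (rule measurable_restrict_space1) measurable
  have "stieltjes_int (SIG \<nu>) z = (\<integral>t. indicator {0..<1} t *\<^sub>R ((1 / (1 - t)) *\<^sub>R (1 / (complex_of_real (t / (1 - t)) + z))) \<partial>\<nu>)"
    unfolding stieltjes_int_def by (rule SIG_int[OF assms mF])
  also have "\<dots> = (\<integral>t. indicator {0..<1} t *\<^sub>R Gf z (clamp t) \<partial>\<nu>)"
  proof (rule Bochner_Integration.integral_cong[OF refl])
    fix t :: real assume "t \<in> space \<nu>"
    show "indicator {0..<1} t *\<^sub>R ((1 / (1 - t)) *\<^sub>R (1 / (complex_of_real (t / (1 - t)) + z))) =
          indicator {0..<1} t *\<^sub>R Gf z (clamp t)"
    proof (cases "t \<in> {0..<1}")
      case True
      define T where "T = complex_of_real t"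
      have T1: "1 - T \<noteq> 0" using True by (simp add: T_def)
      have cl: "clamp t = t" using True by (intro clamp_id) auto
      have a: "complex_of_real (t / (1 - t)) = T / (1 - T)" by (simp add: T_def)
      have b: "T / (1 - T) + z = (T + z * (1 - T)) / (1 - T)"
        using T1 by (simp add: add_divide_distrib)
      have "(1 / (1 - t)) *\<^sub>R (1 / (complex_of_real (t / (1 - t)) + z))
          = (1 / (1 - T)) * (1 / ((T + z * (1 - T)) / (1 - T)))"
        unfolding a b by (simp add: scaleR_conv_of_real T_def)
      also have "\<dots> = (1 / (1 - T)) * ((1 - T) / (T + z * (1 - T)))"
        by simp
      also have "\<dots> = 1 / (T + z * (1 - T))"
        using T1 by simp
      also have "\<dots> = Gf z (clamp t)" by (simp add: cl Gf_def T_def)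
      finally show ?thesis by simp
    qed simp
  qed
  finally show ?thesis .
qed


lemma Gf_split:
  assumes sets: "sets \<nu> = sets borel" and fin: "finite_measure \<nu>"
    and AE01: "AE t in \<nu>. t \<in> {0..1}" and z: "z \<in> cut_plane"
  shows "(\<integral>t. Gf z (clamp t) \<partial>\<nu>) = complex_of_real (measure \<nu> {1}) + stieltjes_int (SIG \<nu>) z"
proof -
  have iG: "integrable \<nu> (\<lambda>t. Gf z (clamp t))"
    by (rule integrable_clamp_comp[OF fin sets Gf_cont[OF z]])
  have i1: "integrable \<nu> (\<lambda>t. indicator {0..<1} t *\<^sub>R Gf z (clamp t))"
    by (rule integrable_mult_indicator[OF _ iG]) (simp add: sets)
  have i2: "integrable \<nu> (\<lambda>t. indicator {1} t *\<^sub>R (1::complex))"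
    by (rule integrable_mult_indicator) (auto simp: sets intro: finite_measure.integrable_const[OF fin])
  have "(\<integral>t. Gf z (clamp t) \<partial>\<nu>) =
        (\<integral>t. indicator {0..<1} t *\<^sub>R Gf z (clamp t) + indicator {1} t *\<^sub>R (1::complex) \<partial>\<nu>)"
  proof (rule integral_cong_AE)
    show "(\<lambda>t. Gf z (clamp t)) \<in> borel_measurable \<nu>"
      by (rule borel_meas_sets[OF sets Gf_clamp_meas])
    show "(\<lambda>t. indicator {0..<1} t *\<^sub>R Gf z (clamp t) + indicator {1} t *\<^sub>R (1::complex)) \<in> borel_measurable \<nu>"
      by (rule borel_meas_sets[OF sets]) measurable
    show "AE t in \<nu>. Gf z (clamp t) = indicator {0..<1} t *\<^sub>R Gf z (clamp t) + indicator {1} t *\<^sub>R (1::complex)"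
      using AE01
    proof (rule eventually_mono)
      fix t :: real assume t: "t \<in> {0..1}"
      show "Gf z (clamp t) = indicator {0..<1} t *\<^sub>R Gf z (clamp t) + indicator {1} t *\<^sub>R (1::complex)"
      proof (cases "t = 1")
        case True then show ?thesis by (simp add: clamp_def Gf_one)
      next
        case False then show ?thesis using t by (simp add: indicator_def)
      qed
    qed
  qed
  also have "\<dots> = (\<integral>t. indicator {0..<1} t *\<^sub>R Gf z (clamp t) \<partial>\<nu>) + (\<integral>t. indicator {1} t *\<^sub>R (1::complex) \<partial>\<nu>)"
    by (rule Bochner_Integration.integral_add[OF i1 i2])
  also have "(\<integral>t. indicator {1} t *\<^sub>R (1::complex) \<partial>\<nu>) = complex_of_real (measure \<nu> {1})"
  proof -
    have "(\<integral>t. indicator {1} t *\<^sub>R (1::complex) \<partial>\<nu>) = (\<integral>t. indicator {1} t \<partial>\<nu>) *\<^sub>R (1::complex)"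
    proof (rule integral_scaleR_left)
      show "integrable \<nu> (indicator {1} :: real \<Rightarrow> real)"
        by (rule integrable_real_indicator) (auto simp: sets finite_measure.emeasure_finite[OF fin] less_top[symmetric])
    qed
    also have "(\<integral>t. indicator {1} t \<partial>\<nu>) = measure \<nu> {1}"
      using sets_eq_imp_space_eq[OF sets] by simp
    finally show ?thesis by (simp add: scaleR_conv_of_real)
  qed
  finally show ?thesis using stieltjes_SIG[OF sets, of z] by simp
qed

definition hfun :: "(real \<Rightarrow> real) \<Rightarrow> real \<Rightarrow> real" where
  "hfun f t = (if t < 1 then f (t / (1 - t)) / (1 - t) else 0)"

lemma hfun_cont:
  assumes fc: "continuous_on {0..} f" and K: "compact K" "K \<subseteq> {0..}"
    and van: "\<forall>x\<in>{0..} - K. f x = 0"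
  shows "continuous_on {0..1} (hfun f)"
proof -
  obtain R where R: "\<forall>x\<in>K. \<bar>x\<bar> \<le> R"
    using compact_imp_bounded[OF K(1)] bounded_real by blast
  define R' where "R' = max R 0"
  have R': "R' \<ge> 0" "\<forall>x\<in>K. x \<le> R'" using R by (auto simp: R'_def)
  define c where "c = (R' + 1) / (R' + 2)"
  have c: "0 \<le> c" "c < 1" using R' by (auto simp: c_def)
  have zero: "hfun f t = 0" if "t \<in> {c..1}" for t
  proof (cases "t < 1")
    case True
    have "c / (1 - c) = R' + 1" using R' by (simp add: c_def field_simps)
    moreover have "c / (1 - c) \<le> t / (1 - t)"
      using that True c by (auto intro!: frac_le simp: field_simps)
    ultimately have "t / (1 - t) > R'" by linarith
    moreover have "t / (1 - t) \<ge> 0" using that True c by auto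
    ultimately have "t / (1 - t) \<in> {0..} - K" using R' by auto
    then show ?thesis using van True by (simp add: hfun_def)
  qed (simp add: hfun_def)
  have c1: "continuous_on {c..1} (hfun f)"
    by (rule continuous_on_eq[OF continuous_on_const[of _ 0]]) (simp add: zero)
  have c2: "continuous_on {0..c} (hfun f)"
  proof (rule continuous_on_eq)
    show "continuous_on {0..c} (\<lambda>t. f (t / (1 - t)) / (1 - t))"
    proof (intro continuous_intros)
      show "continuous_on {0..c} (\<lambda>t. f (t / (1 - t)))"
      proof (rule continuous_on_compose2[OF fc])
        show "continuous_on {0..c} (\<lambda>t::real. t / (1 - t))"
          using c by (intro continuous_intros) auto
        show "(\<lambda>t::real. t / (1 - t)) ` {0..c} \<subseteq> {0..}" using c by auto
      qed
    qed (use c in auto)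
    show "\<And>t. t \<in> {0..c} \<Longrightarrow> f (t / (1 - t)) / (1 - t) = hfun f t"
      using c by (auto simp: hfun_def)
  qed
  have "continuous_on ({0..c} \<union> {c..1}) (hfun f)"
    by (rule continuous_on_closed_Un[OF _ _ c2 c1]) auto
  moreover have "{0..c} \<union> {c..1} = {0..(1::real)}" using c by auto
  ultimately show ?thesis by simp
qed

lemma hfun_TM:
  assumes pmh: "pos_measure_halfline \<sigma>" and hc: "continuous_on {0..1} (hfun f)"
  shows "(\<integral>t. hfun f (clamp t) \<partial>TM \<sigma>) = (\<integral>x. f x \<partial>\<sigma>)"
proof -
  have "(\<integral>t. hfun f (clamp t) \<partial>TM \<sigma>) = (\<integral>x. (1 / (x + 1)) *\<^sub>R hfun f (clamp (x / (x + 1))) \<partial>\<sigma>)"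
    by (rule TM_int[OF pmh meas_clamp_comp[OF hc]])
  also have "\<dots> = (\<integral>x. f x \<partial>\<sigma>)"
  proof (rule Bochner_Integration.integral_cong[OF refl])
    fix x assume "x \<in> space \<sigma>"
    then have x: "x \<ge> 0" using pmh_space[OF pmh] by auto
    have cl: "clamp (x / (x + 1)) = x / (x + 1)"
      using x by (intro clamp_id) auto
    have lt: "x / (x + 1) < 1" using x by simp
    have e1: "1 - x / (x + 1) = 1 / (x + 1)" using x by (simp add: field_simps)
    have e2: "(x / (x + 1)) / (1 / (x + 1)) = x" using x by simp
    show "(1 / (x + 1)) *\<^sub>R hfun f (clamp (x / (x + 1))) = f x"
      unfolding cl hfun_def using lt x by (simp add: e1 e2)
  qed
  finally show ?thesis .
qed

lemma hfun_SIG: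
  assumes sets: "sets \<nu> = sets borel" and AE01: "AE t in \<nu>. t \<in> {0..1}"
    and fc: "continuous_on {0..} f" and hc: "continuous_on {0..1} (hfun f)"
  shows "(\<integral>t. hfun f (clamp t) \<partial>\<nu>) = (\<integral>x. f x \<partial>SIG \<nu>)"
proof -
  define f' where "f' x = f (max 0 x)" for x
  have f'c: "continuous_on UNIV f'"
    unfolding f'_def by (rule continuous_on_compose2[OF fc]) (auto intro!: continuous_intros)
  have f'm [measurable]: "f' \<in> borel_measurable borel"
    by (rule borel_measurable_continuous_onI[OF f'c])
  have "(\<integral>x. f x \<partial>SIG \<nu>) = (\<integral>x. f' x \<partial>SIG \<nu>)"
    by (rule Bochner_Integration.integral_cong[OF refl]) (simp add: f'_def SIG_def)
  also have "\<dots> = (\<integral>t. indicator {0..<1} t *\<^sub>R ((1 / (1 - t)) *\<^sub>R f' (t / (1 - t))) \<partial>\<nu>)"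
    by (rule SIG_int[OF sets measurable_restrict_space1[OF f'm]])
  also have "\<dots> = (\<integral>t. hfun f (clamp t) \<partial>\<nu>)"
  proof (rule integral_cong_AE)
    show "(\<lambda>t. indicator {0..<1} t *\<^sub>R ((1 / (1 - t)) *\<^sub>R f' (t / (1 - t)))) \<in> borel_measurable \<nu>"
      by (rule borel_meas_sets[OF sets]) measurable
    show "(\<lambda>t. hfun f (clamp t)) \<in> borel_measurable \<nu>"
      by (rule borel_meas_sets[OF sets meas_clamp_comp[OF hc]])
    show "AE t in \<nu>. indicator {0..<1} t *\<^sub>R ((1 / (1 - t)) *\<^sub>R f' (t / (1 - t))) = hfun f (clamp t)"
      using AE01
    proof (rule eventually_mono)
      fix t :: real assume t: "t \<in> {0..1}"
      show "indicator {0..<1} t *\<^sub>R ((1 / (1 - t)) *\<^sub>R f' (t / (1 - t))) = hfun f (clamp t)"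
      proof (cases "t = 1")
        case True then show ?thesis by (simp add: clamp_def hfun_def)
      next
        case False
        then have "t < 1" "t \<ge> 0" using t by auto
        then show ?thesis using t by (simp add: clamp_id hfun_def f'_def)
      qed
    qed
  qed
  finally show ?thesis by simp
qed


definition normP :: "real measure \<Rightarrow> real measure" where
  "normP L = (if measure L UNIV = 0 then return borel 0
              else density L (\<lambda>_. ennreal (1 / measure L UNIV)))"

lemma normP_props:
  assumes fin: "finite_measure L" and sets: "sets L = sets borel" and AE01: "AE t in L. t \<in> {0..1}"
  shows "real_distribution (normP L)" "AE t in normP L. t \<in> {0..1}"
    "\<And>f :: real \<Rightarrow> 'b::{banach, second_countable_topology}. f \<in> borel_measurable borel \<Longrightarrow>
       (\<integral>t. f t \<partial>L) = measure L UNIV *\<^sub>R (\<integral>t. f t \<partial>normP L)"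
proof -
  define m where "m = measure L UNIV"
  have sp: "space L = UNIV" using sets_eq_imp_space_eq[OF sets] by simp
  have em: "emeasure L UNIV = ennreal m"
    using finite_measure.emeasure_eq_measure[OF fin, of UNIV] by (simp add: m_def)
  have m0: "m \<ge> 0" by (simp add: m_def)
  have "real_distribution (normP L) \<and> (AE t in normP L. t \<in> {0..1}) \<and>
    (\<forall>f :: real \<Rightarrow> 'b::{banach, second_countable_topology}. f \<in> borel_measurable borel \<longrightarrow>
       (\<integral>t. f t \<partial>L) = m *\<^sub>R (\<integral>t. f t \<partial>normP L))"
  proof (cases "m = 0")
    case True
    then have P: "normP L = return borel 0" by (simp add: normP_def m_def)
    have rd: "real_distribution (return borel (0::real))"
      by (rule real_distribution.intro) (auto intro: prob_space_return simp: real_distribution_axioms_def)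
    have ae: "AE t in return borel (0::real). t \<in> {0..1}"
      by (subst AE_return) auto
    have z: "(\<integral>t. f t \<partial>L) = 0" for f :: "real \<Rightarrow> 'b"
    proof (rule integral_eq_zero_AE)
      show "AE x in L. f x = 0"
        by (rule emeasure_0_AE) (use em True sp in simp)
    qed
    show ?thesis unfolding P using rd ae True z by simp
  next
    case False
    then have mpos: "m > 0" using m0 by simp
    then have P: "normP L = density L (\<lambda>_. ennreal (1 / m))" by (simp add: normP_def m_def)
    have ps: "prob_space (density L (\<lambda>_. ennreal (1 / m)))"
    proof
      have "emeasure (density L (\<lambda>_. ennreal (1 / m))) (space (density L (\<lambda>_. ennreal (1 / m))))
          = ennreal (1 / m) * emeasure L UNIV"
        by (simp add: sp emeasure_density_const sets)
      also have "\<dots> = ennreal (1 / m) * ennreal m" by (simp add: em)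
      also have "\<dots> = ennreal ((1 / m) * m)" using mpos by (intro ennreal_mult[symmetric]) auto
      also have "\<dots> = 1" using mpos by simp
      finally show "emeasure (density L (\<lambda>_. ennreal (1 / m))) (space (density L (\<lambda>_. ennreal (1 / m)))) = 1" .
    qed
    have rd: "real_distribution (density L (\<lambda>_. ennreal (1 / m)))"
      by (rule real_distribution.intro[OF ps]) (simp add: real_distribution_axioms_def sets)
    have ae: "AE t in density L (\<lambda>_. ennreal (1 / m)). t \<in> {0..1}"
      by (subst AE_density) (use AE01 in \<open>auto elim: eventually_mono\<close>)
    have int: "(\<integral>t. f t \<partial>L) = m *\<^sub>R (\<integral>t. f t \<partial>density L (\<lambda>_. ennreal (1 / m)))"
      if fm: "f \<in> borel_measurable borel" for f :: "real \<Rightarrow> 'b::{banach, second_countable_topology}"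
    proof -
      have "(\<integral>t. f t \<partial>density L (\<lambda>_. ennreal (1 / m))) = (\<integral>t. (1 / m) *\<^sub>R f t \<partial>L)"
        by (rule integral_density) (use fm sets mpos in \<open>auto intro: borel_meas_sets\<close>)
      also have "\<dots> = (1 / m) *\<^sub>R (\<integral>t. f t \<partial>L)" by (rule integral_scaleR_right)
      finally show ?thesis using mpos by simp
    qed
    show ?thesis unfolding P using rd ae int by blast
  qed
  then show "real_distribution (normP L)" "AE t in normP L. t \<in> {0..1}"
    "\<And>f :: real \<Rightarrow> 'b::{banach, second_countable_topology}. f \<in> borel_measurable borel \<Longrightarrow>
       (\<integral>t. f t \<partial>L) = measure L UNIV *\<^sub>R (\<integral>t. f t \<partial>normP L)"
    by (auto simp: m_def)
qed


lemma Gf_one_all: "Gf 1 t = 1"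
  by (simp add: Gf_def)

lemma isCont_Gf_clamp:
  assumes "z \<in> cut_plane"
  shows "isCont (\<lambda>t. Gf z (clamp t)) x"
  using cont_clamp_comp[OF Gf_cont[OF assms]] by (simp add: continuous_on_eq_continuous_at)

lemma cv_cont_complex_ext: assumes "wconv N M B" "\<And>w::real. \<bar>w\<bar> < 1/2 \<Longrightarrow> wconv.cv N M (\<lambda>t. 1/(1+w*t))" "continuous_on {0..1} (F::real\<Rightarrow>complex)" shows "wconv.cv N M F"
  by (rule wconv.cv_cont_complex[OF assms])

theorem lemma2p7:
  fixes \<sigma>s :: "nat \<Rightarrow> real measure" and \<phi> :: "complex \<Rightarrow> complex"
  assumes adm: "\<And>n. stieltjes_admissible (\<sigma>s n)"
    and hol: "\<phi> holomorphic_on {z. Re z > 0}"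
    and conv: "\<And>K. compact K \<Longrightarrow> K \<subseteq> {z. Re z > 0} \<Longrightarrow>
                 uniform_limit K (\<lambda>n z. stieltjes_int (\<sigma>s n) z) \<phi> sequentially"
  shows "\<exists>(a::real) \<sigma>. a \<ge> 0 \<and> stieltjes_admissible \<sigma> \<and>
           (\<forall>z. Re z > 0 \<longrightarrow> \<phi> z = complex_of_real a + stieltjes_int \<sigma> z) \<and>
           vague_convergence \<sigma>s \<sigma> \<and>
           (\<forall>K. compact K \<and> K \<subseteq> cut_plane \<longrightarrow>
              uniform_limit K (\<lambda>n z. stieltjes_int (\<sigma>s n) z)
                (\<lambda>z. complex_of_real a + stieltjes_int \<sigma> z) sequentially)"
proof -
  define N where "N n = TM (\<sigma>s n)" for n
  have pmh: "pos_measure_halfline (\<sigma>s n)" for n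
    using adm unfolding stieltjes_admissible_def by blast
  have finN: "finite_measure (N n)" for n
    unfolding N_def by (rule TM_finite[OF adm])
  have setsN: "sets (N n) = sets borel" for n by (simp add: N_def)
  have spN: "space (N n) = UNIV" for n by (simp add: N_def)
  have AEN: "AE t in N n. t \<in> {0..1}" for n
    unfolding N_def using TM_AE[OF pmh] by (rule eventually_mono) auto
  have phiN: "stieltjes_int (\<sigma>s n) z = (\<integral>t. Gf z (clamp t) \<partial>N n)" for n z
    unfolding N_def by (rule stieltjes_TM[OF pmh])
  have rp_cut: "z \<in> cut_plane" if "Re z > 0" for z
    using that by (auto simp: cut_plane_def)
  have pw: "(\<lambda>n. stieltjes_int (\<sigma>s n) z) \<longlonglongrightarrow> \<phi> z" if "Re z > 0" for z
  proof -
    have "uniform_limit {z} (\<lambda>n z. stieltjes_int (\<sigma>s n) z) \<phi> sequentially"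
      by (rule conv) (use that in auto)
    from tendsto_uniform_limitI[OF this, of z] show ?thesis by simp
  qed
  define m where "m n = measure (N n) UNIV" for n
  have mphi: "stieltjes_int (\<sigma>s n) 1 = complex_of_real (m n)" for n
    by (simp add: phiN Gf_one_all m_def spN scaleR_conv_of_real)
  have mlim: "m \<longlonglongrightarrow> Re (\<phi> 1)"
    using tendsto_Re[OF pw[of 1]] mphi by simp
  define m0 where "m0 = Re (\<phi> 1)"
  have mlim0: "m \<longlonglongrightarrow> m0" using mlim by (simp add: m0_def)
  have m0nn: "m0 \<ge> 0"
    by (rule LIMSEQ_le_const[OF mlim0]) (simp add: m_def)
  obtain B where B: "\<And>n. m n \<le> B" and B0: "m0 \<le> B"
  proof -
    have "Bseq m" using mlim0 convergent_imp_Bseq convergentI by blast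
    then obtain Kb where Kb: "\<forall>n. norm (m n) \<le> Kb" by (rule BseqE) blast
    then have 1: "m n \<le> Kb" for n by (metis abs_le_D1 real_norm_def)
    have 2: "m0 \<le> Kb" by (rule LIMSEQ_le_const2[OF mlim0]) (use 1 in blast)
    show ?thesis using that 1 2 by blast
  qed
  define P where "P n = normP (N n)" for n
  have rdP: "real_distribution (P n)" for n
    unfolding P_def by (rule normP_props(1)[OF finN setsN AEN])
  have AEP: "AE t in P n. t \<in> {0..1}" for n
    unfolding P_def by (rule normP_props(2)[OF finN setsN AEN])
  have intP: "(\<integral>t. f t \<partial>N n) = m n *\<^sub>R (\<integral>t. f t \<partial>P n)"
    if "f \<in> borel_measurable borel" for n and f :: "real \<Rightarrow> complex"
    unfolding P_def m_def by (rule normP_props(3)[OF finN setsN AEN that])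
  have spP: "space (P n) = UNIV" for n
    using sets_eq_imp_space_eq[OF real_distribution.events_eq_borel[OF rdP[of n]]] by simp
  have tight: "tight P"
    unfolding tight_def
  proof (intro conjI allI impI)
    show "real_distribution (P n)" for n by (rule rdP)
    fix e :: real assume e: "e > 0"
    have "measure (P n) {-1<..2} = 1" for n
    proof -
      interpret rd: real_distribution "P n" by (rule rdP)
      have "measure (P n) {x \<in> space (P n). x \<in> {-1<..2}} = 1 \<longleftrightarrow> (AE x in P n. x \<in> {-1<..2})"
        by (rule rd.prob_Collect_eq_1) (simp add: spP)
      moreover have "AE x in P n. x \<in> {-1<..2}"
        using AEP[of n] by (rule eventually_mono) auto
      moreover have "{x \<in> space (P n). x \<in> {-1<..2}} = {-1<..(2::real)}" by (auto simp: spP)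
      ultimately show ?thesis by metis
    qed
    then show "\<exists>a b::real. a < b \<and> (\<forall>n. 1 - e < measure (P n) {a<..b})"
      using e by (intro exI[of _ "-1"] exI[of _ 2]) auto
  qed
  obtain r Pinf where r: "strict_mono r" and rdPinf: "real_distribution Pinf"
    and wc: "weak_conv_m (P \<circ> id \<circ> r) Pinf"
    using tight_imp_convergent_subsubsequence[OF tight strict_mono_id] by blast
  have wconvP: "(\<lambda>n. \<integral>t. f t \<partial>P (r n)) \<longlonglongrightarrow> (\<integral>t. f t \<partial>Pinf)"
    if "\<And>x. isCont f x" "\<And>x. norm (f x) \<le> C" for f :: "real \<Rightarrow> complex" and C
    using weak_conv_imp_integral_bdd_continuous_conv[of "P \<circ> id \<circ> r" Pinf f C] rdP rdPinf wc that
    by (simp add: o_def)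
  define \<nu> where "\<nu> = density Pinf (\<lambda>_. ennreal m0)"
  have setsPinf: "sets Pinf = sets borel" by (rule real_distribution.events_eq_borel[OF rdPinf])
  have spPinf: "space Pinf = UNIV" using sets_eq_imp_space_eq[OF setsPinf] by simp
  have setsnu: "sets \<nu> = sets borel" by (simp add: \<nu>_def setsPinf)
  have spnu: "space \<nu> = UNIV" by (simp add: \<nu>_def spPinf)
  have emnu: "emeasure \<nu> UNIV = ennreal m0"
  proof -
    have "emeasure \<nu> UNIV = ennreal m0 * emeasure Pinf UNIV"
      unfolding \<nu>_def by (rule emeasure_density_const) (simp add: setsPinf)
    also have "emeasure Pinf UNIV = 1"
      using prob_space.emeasure_space_1[OF real_distribution.axioms(1)[OF rdPinf]] spPinf by simp
    finally show ?thesis by simp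
  qed
  have finnu: "finite_measure \<nu>"
    by (rule finite_measureI) (simp add: spnu emnu)
  have measnu: "measure \<nu> UNIV = m0"
    using emnu m0nn by (simp add: measure_def)
  have intnu: "(\<integral>t. f t \<partial>\<nu>) = m0 *\<^sub>R (\<integral>t. f t \<partial>Pinf)"
    if "f \<in> borel_measurable borel" for f :: "real \<Rightarrow> complex"
  proof -
    have "(\<integral>t. f t \<partial>\<nu>) = (\<integral>t. m0 *\<^sub>R f t \<partial>Pinf)"
      unfolding \<nu>_def
      by (rule integral_density) (use that setsPinf m0nn in \<open>auto intro: borel_meas_sets\<close>)
    then show ?thesis by simp
  qed
  have mr: "(\<lambda>n. m (r n)) \<longlonglongrightarrow> m0"
    using LIMSEQ_subseq_LIMSEQ[OF mlim0 r] by (simp add: o_def)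
  have convsub: "(\<lambda>n. \<integral>t. f t \<partial>N (r n)) \<longlonglongrightarrow> (\<integral>t. f t \<partial>\<nu>)"
    if fc: "\<And>x. isCont f x" and fb: "\<And>x. norm (f x) \<le> C" for f :: "real \<Rightarrow> complex" and C
  proof -
    have fm: "f \<in> borel_measurable borel"
      by (rule borel_measurable_continuous_onI) (simp add: continuous_at_imp_continuous_on fc)
    have "(\<lambda>n. m (r n) *\<^sub>R (\<integral>t. f t \<partial>P (r n))) \<longlonglongrightarrow> m0 *\<^sub>R (\<integral>t. f t \<partial>Pinf)"
      by (rule tendsto_scaleR[OF mr wconvP[OF fc fb]])
    then show ?thesis by (simp add: intP[OF fm] intnu[OF fm])
  qed
  have AEnu: "AE t in \<nu>. t \<in> {0..1}"
  proof -
    define g where "g t = min 1 \<bar>t - clamp t\<bar>" for t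
    have gc: "isCont g x" for x unfolding g_def by (intro continuous_intros isCont_clamp)
    have gm [measurable]: "g \<in> borel_measurable borel"
      by (rule borel_measurable_continuous_onI) (simp add: continuous_at_imp_continuous_on gc)
    have g0: "g t = 0" if "t \<in> {0..1}" for t using that by (simp add: g_def clamp_id)
    have "(\<lambda>n. \<integral>t. complex_of_real (g t) \<partial>N (r n)) \<longlonglongrightarrow> (\<integral>t. complex_of_real (g t) \<partial>\<nu>)"
      by (rule convsub[of _ 1]) (auto intro!: continuous_intros isCont_clamp simp: g_def)
    moreover have zz: "(\<integral>t. complex_of_real (g t) \<partial>N n) = 0" for n
      by (rule integral_eq_zero_AE) (rule eventually_mono[OF AEN[of n]], simp add: g0)
    ultimately have "(\<lambda>n. 0::complex) \<longlonglongrightarrow> (\<integral>t. complex_of_real (g t) \<partial>\<nu>)"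
      by (simp add: zz)
    then have "(\<integral>t. complex_of_real (g t) \<partial>\<nu>) = 0"
      using LIMSEQ_unique tendsto_const by metis
    then have i0: "(\<integral>t. g t \<partial>\<nu>) = 0" by simp
    have ig: "integrable \<nu> g"
    proof (rule finite_measure.integrable_const_bound[OF finnu])
      show "AE x in \<nu>. norm (g x) \<le> 1" by (rule AE_I2) (simp add: g_def)
      show "g \<in> borel_measurable \<nu>" by (rule borel_meas_sets[OF setsnu gm])
    qed
    have "AE t in \<nu>. g t = 0"
      using integral_nonneg_eq_0_iff_AE[OF ig] i0 by (simp add: g_def)
    then show ?thesis
    proof (rule eventually_mono)
      fix t assume "g t = 0"
      then have "t = clamp t" by (simp add: g_def)
      then show "t \<in> {0..1}" using clamp_in[of t] by simp
    qed
  qed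
  have phinu: "\<phi> z = (\<integral>t. Gf z (clamp t) \<partial>\<nu>)" if z: "Re z > 0" for z
  proof -
    have zc: "z \<in> cut_plane" by (rule rp_cut[OF z])
    obtain C where C: "\<And>t. norm (Gf z (clamp t)) \<le> C"
      using bound_clamp_comp[OF Gf_cont[OF zc]] by blast
    have L1: "(\<lambda>n. \<integral>t. Gf z (clamp t) \<partial>N (r n)) \<longlonglongrightarrow> (\<integral>t. Gf z (clamp t) \<partial>\<nu>)"
      by (rule convsub[OF isCont_Gf_clamp[OF zc] C])
    have L2: "(\<lambda>n. \<integral>t. Gf z (clamp t) \<partial>N (r n)) \<longlonglongrightarrow> \<phi> z"
      using LIMSEQ_subseq_LIMSEQ[OF pw[OF z] r] by (simp add: o_def phiN)
    show ?thesis using LIMSEQ_unique[OF L2 L1] .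
  qed
  have wc: "wconv N \<nu> B"
    unfolding wconv_def
    apply (intro conjI allI)
         apply (rule finN)
        apply (rule finnu)
       apply (rule setsN)
      apply (rule setsnu)
    using B apply (simp add: m_def)
    using B0 measnu by simp
  interpret W: wconv N \<nu> B by (rule wc)
  have hyp: "W.cv (\<lambda>t. 1 / (1 + w * t))" if w: "\<bar>w\<bar> < 1/2" for w :: real
  proof -
    define x where "x = 1 / (1 + w)"
    have w1: "1 + w > 0" using w by simp
    have x: "x > 0" using w1 by (simp add: x_def)
    define z where "z = complex_of_real x"
    have z: "Re z > 0" using x by (simp add: z_def)
    have cvG: "W.cv (Gf z)"
      unfolding W.cv_def using pw[OF z] by (simp add: phiN phinu[OF z])
    have eq: "1 / (1 + w * s) = x * Re (Gf z s)" if s: "s \<in> {0..1}" for s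
    proof -
      have ws: "1 + w * s > 0"
      proof -
        have "\<bar>w * s\<bar> \<le> \<bar>w\<bar>" using s by (auto simp: abs_mult intro: mult_left_le)
        then show ?thesis using w by linarith
      qed
      have "Gf z s = complex_of_real (1 / (s + x * (1 - s)))"
        by (simp add: Gf_def z_def)
      then have "Re (Gf z s) = 1 / (s + x * (1 - s))" by simp
      moreover have "s + x * (1 - s) = (1 + w * s) / (1 + w)"
        using w1 by (simp add: x_def field_simps)
      ultimately have "x * Re (Gf z s) = (1 / (1 + w)) * ((1 + w) / (1 + w * s))"
        by (simp add: x_def)
      also have "\<dots> = 1 / (1 + w * s)" using w1 ws by simp
      finally show ?thesis by simp
    qed
    have fe: "(\<lambda>t. 1 / (1 + w * clamp t)) = (\<lambda>t. x * Re (Gf z (clamp t)))"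
      using eq clamp_in by auto
    have iN: "integrable (N n) (\<lambda>t. Gf z (clamp t))" for n
      by (rule W.intN[OF Gf_cont[OF rp_cut[OF z]]])
    have iM: "integrable \<nu> (\<lambda>t. Gf z (clamp t))"
      by (rule W.intM[OF Gf_cont[OF rp_cut[OF z]]])
    have "(\<lambda>n. x * Re (\<integral>t. Gf z (clamp t) \<partial>N n)) \<longlonglongrightarrow> x * Re (\<integral>t. Gf z (clamp t) \<partial>\<nu>)"
      using cvG unfolding W.cv_def by (intro tendsto_mult_left tendsto_Re)
    then show ?thesis
      unfolding W.cv_def fe
      by (simp add: integral_Re[OF iN] integral_Re[OF iM])
  qed
  have cvGf: "W.cv (Gf z)" if "z \<in> cut_plane" for z
    using cv_cont_complex_ext[OF wc hyp Gf_cont[OF that]] .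
  define a where "a = measure \<nu> {1}"
  define \<sigma> where "\<sigma> = SIG \<nu>"
  have splitK: "(\<integral>t. Gf z (clamp t) \<partial>\<nu>) = complex_of_real a + stieltjes_int \<sigma> z"
    if "z \<in> cut_plane" for z
    unfolding a_def \<sigma>_def by (rule Gf_split[OF setsnu finnu AEnu that])
  show ?thesis
  proof (intro exI[of _ a] exI[of _ \<sigma>] conjI allI impI)
    show "a \<ge> 0" by (simp add: a_def)
    show "stieltjes_admissible \<sigma>" unfolding \<sigma>_def by (rule SIG_admissible[OF setsnu finnu])
    show "\<phi> z = complex_of_real a + stieltjes_int \<sigma> z" if "Re z > 0" for z
      using phinu[OF that] splitK[OF rp_cut[OF that]] by simp
    show "vague_convergence \<sigma>s \<sigma>"
      unfolding vague_convergence_def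
    proof (intro allI impI)
      fix f :: "real \<Rightarrow> real"
      assume "continuous_on {0..} f \<and> (\<exists>K. compact K \<and> K \<subseteq> {0..} \<and> (\<forall>x\<in>{0..} - K. f x = 0))"
      then obtain K where fc: "continuous_on {0..} f" and K: "compact K" "K \<subseteq> {0..}"
        and van: "\<forall>x\<in>{0..} - K. f x = 0" by blast
      have hc: "continuous_on {0..1} (hfun f)" by (rule hfun_cont[OF fc K van])
      have "W.cv (hfun f)" by (rule W.cv_cont[OF hyp hc])
      then show "(\<lambda>n. \<integral>x. f x \<partial>\<sigma>s n) \<longlonglongrightarrow> (\<integral>x. f x \<partial>\<sigma>)"
        unfolding W.cv_def N_def \<sigma>_def
        by (simp add: hfun_TM[OF pmh hc] hfun_SIG[OF setsnu AEnu fc hc])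
    qed
    fix K assume K: "compact K \<and> K \<subseteq> cut_plane"
    have "uniform_limit K (\<lambda>n z. \<integral>t. Gf z (clamp t) \<partial>N n) (\<lambda>z. \<integral>t. Gf z (clamp t) \<partial>\<nu>) sequentially"
    proof (rule W.unif)
      show "compact K" using K by blast
      show "continuous_on (K \<times> {0..1}) (\<lambda>(z, t). Gf z t)" by (rule Gf_cont2) (use K in blast)
      show "W.cv (Gf z)" if "z \<in> K" for z
      proof -
        have "z \<in> cut_plane" using K that by blast
        then show ?thesis by (rule cvGf)
      qed
    qed
    then show "uniform_limit K (\<lambda>n z. stieltjes_int (\<sigma>s n) z)
                (\<lambda>z. complex_of_real a + stieltjes_int \<sigma> z) sequentially"
    proof (rule uniform_limit_cong'[THEN iffD1, rotated 2])
      show "\<And>n z. z \<in> K \<Longrightarrow> (\<integral>t. Gf z (clamp t) \<partial>N n) = stieltjes_int (\<sigma>s n) z"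
        by (simp add: phiN)
      show "\<And>z. z \<in> K \<Longrightarrow> (\<integral>t. Gf z (clamp t) \<partial>\<nu>) = complex_of_real a + stieltjes_int \<sigma> z"
        using K splitK by blast
    qed
  qed
qed

end
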